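(* Let $0<\alpha<1$, $\lambda>0$, $C=\frac1\alpha-1$ and $W_{+}(s)=\frac{1}{C}\,\lambda\frac{\sin(\alpha\pi)}{\pi}\frac{s^{\alpha-1}}{s^{2\alpha}-2\lambda s^{\alpha}\cos(\alpha\pi)+\lambda^{2}}$ for $s>0$. Let $u_1,u_2$ be independent random variables uniformly distributed on $(0,1)$, put $v=Cu_1$ and $$\tau=-\Big(\frac1\lambda\Big)^{1/\alpha}\left(\frac{\sin(\alpha\pi(1+2v))-\sin(\alpha\pi)}{\sin(2\alpha\pi(1+v))}\right)^{1/\alpha}\log(u_2).$$ Then $\tau$ is a positive random variable whose survival function is $$\mathbb{P}(\tau>t)=\phi_{W_+}(t):=\int_0^\infty W_{+}(s)\,e^{-st}\,\mathrm{d}s\qquad (t\ge 0).$$ *)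

theory Defs
  imports "HOL-Probability.Probability"
begin

definition C_const :: "real \<Rightarrow> real" where
  "C_const a = 1 / a - 1"

definition W_plus :: "real \<Rightarrow> real \<Rightarrow> real \<Rightarrow> real" where
  "W_plus a lam s =
     (1 / C_const a) * lam * (sin (a * pi) / pi) *
     (s powr (a - 1) / (s powr (2 * a) - 2 * lam * s powr a * cos (a * pi) + lam ^ 2))"

definition tau_fun :: "real \<Rightarrow> real \<Rightarrow> real \<Rightarrow> real \<Rightarrow> real" where
  "tau_fun a lam x1 x2 =
     (let v = C_const a * x1 in
      - ((1 / lam) powr (1 / a)) *
        ((sin (a * pi * (1 + 2 * v)) - sin (a * pi)) / sin (2 * a * pi * (1 + v))) powr (1 / a) *
        ln x2)"

end

theory Submission
  imports Defs
begin


definition Xf :: "real \<Rightarrow> real \<Rightarrow> real" where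
  "Xf a y = sin (pi*(1-a)*y) / sin (pi*(1-a)*y + a*pi)"
definition Sf :: "real \<Rightarrow> real \<Rightarrow> real \<Rightarrow> real" where
  "Sf a lam y = (lam * Xf a y) powr (1/a)"
definition Sd :: "real \<Rightarrow> real \<Rightarrow> real \<Rightarrow> real" where
  "Sd a lam y = (1/a) * Sf a lam y * (pi * (1-a) * sin (a*pi)) / (sin (pi*(1-a)*y) * sin(pi*(1-a)*y + a*pi))"

lemma trig_pos:
  assumes "0 < a" "a < 1" "0 < y" "y < 1"
  shows "sin (pi*(1-a)*y) > 0" "sin (pi*(1-a)*y + a*pi) > 0"
proof -
  have h1: "0 < pi*(1-a)*y" using assms by simp
  have h2: "pi*(1-a)*y < pi*(1-a)" using mult_strict_left_mono[of y 1 "pi*(1-a)"] assms by simp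
  have e: "pi*(1-a) + a*pi = pi" by (simp add: algebra_simps)
  have h3: "pi*(1-a)*y < pi" using h2 e assms pi_gt_zero by (smt (verit) mult_pos_pos)
  have h4: "pi*(1-a)*y + a*pi < pi" using h2 e by linarith
  have h5: "0 < pi*(1-a)*y + a*pi" using h1 mult_pos_pos[OF assms(1) pi_gt_zero] by linarith
  show "sin (pi*(1-a)*y) > 0" using h1 h3 by (rule sin_gt_zero)
  show "sin (pi*(1-a)*y + a*pi) > 0" using h5 h4 by (rule sin_gt_zero)
qed

lemma trig_nonneg:
  assumes "0 < a" "a < 1" "0 \<le> y" "y \<le> 1"
  shows "sin (pi*(1-a)*y) \<ge> 0" "sin (pi*(1-a)*y + a*pi) \<ge> 0"
proof -
  have h1: "0 \<le> pi*(1-a)*y" using assms by simp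
  have h2: "pi*(1-a)*y \<le> pi*(1-a)" using mult_left_mono[of y 1 "pi*(1-a)"] assms by simp
  have e: "pi*(1-a) + a*pi = pi" by (simp add: algebra_simps)
  have h3: "pi*(1-a)*y \<le> pi" using h2 e assms pi_gt_zero by (smt (verit) mult_pos_pos)
  have h4: "pi*(1-a)*y + a*pi \<le> pi" using h2 e by linarith
  have h5: "0 \<le> pi*(1-a)*y + a*pi" using h1 assms by simp
  show "sin (pi*(1-a)*y) \<ge> 0" using h1 h3 by (rule sin_ge_zero)
  show "sin (pi*(1-a)*y + a*pi) \<ge> 0" using h5 h4 by (rule sin_ge_zero)
qed

lemma Sd_nonneg: "0 < a \<Longrightarrow> a < 1 \<Longrightarrow> 0 \<le> y \<Longrightarrow> y \<le> 1 \<Longrightarrow> 0 \<le> Sd a lam y"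
  unfolding Sd_def Sf_def
  apply (intro divide_nonneg_nonneg mult_nonneg_nonneg)
  using trig_nonneg[of a y] sin_ge_zero[of "a*pi"] by auto

lemma key_trig: "(sin (p::real))^2 - 2 * sin p * sin (p + c) * cos c + (sin (p+c))^2 = (sin c)^2"
proof -
  have "sin p = sin ((p + c) - c)" by simp
  also have "\<dots> = sin (p+c) * cos c - cos (p+c) * sin c" by (rule sin_diff)
  finally have e: "sin p = sin (p+c) * cos c - cos (p+c) * sin c" .
  show ?thesis unfolding e
    using sin_cos_squared_add[of c] sin_cos_squared_add[of "p+c"]
    by (simp only: power2_eq_square) algebra
qed

lemma Xf_deriv:
  assumes "0 < a" "a < 1" "0 < y" "y < 1"
  shows "DERIV (Xf a) y :> pi*(1-a) * sin (a*pi) / (sin (pi*(1-a)*y + a*pi))^2"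
proof -
  define k where "k = pi*(1-a)"
  have q: "sin (k*y + a*pi) > 0" using trig_pos[OF assms] by (simp add: k_def)
  have sd: "sin (k*y + a*pi) * cos (k*y) - cos (k*y + a*pi) * sin (k*y) = sin (a*pi)"
    using sin_diff[of "k*y + a*pi" "k*y"] by simp
  have "DERIV (\<lambda>y. sin (k*y) / sin (k*y + a*pi)) y :>
      ((cos (k*y) * k) * sin (k*y + a*pi) - sin (k*y) * (cos (k*y + a*pi) * k)) / (sin (k*y + a*pi) * sin (k*y + a*pi))"
    using q by (auto intro!: derivative_eq_intros)
  moreover have "((cos (k*y) * k) * sin (k*y + a*pi) - sin (k*y) * (cos (k*y + a*pi) * k))
      = k * sin (a*pi)" using sd by (simp add: algebra_simps)
  ultimately have "DERIV (\<lambda>y. sin (k*y) / sin (k*y + a*pi)) y :> k * sin (a*pi) / (sin (k*y + a*pi))^2"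
    by (simp add: power2_eq_square)
  then show ?thesis unfolding Xf_def k_def by (simp add: mult.assoc)
qed

lemma Xf_pos: "0 < a \<Longrightarrow> a < 1 \<Longrightarrow> 0 < y \<Longrightarrow> y < 1 \<Longrightarrow> 0 < Xf a y"
  unfolding Xf_def using trig_pos[of a y] by simp

lemma Sf_pos: "0 < a \<Longrightarrow> a < 1 \<Longrightarrow> 0 < lam \<Longrightarrow> 0 < y \<Longrightarrow> y < 1 \<Longrightarrow> 0 < Sf a lam y"
  unfolding Sf_def using Xf_pos[of a y] by simp

lemma Sf_deriv:
  assumes "0 < a" "a < 1" "0 < lam" "0 < y" "y < 1"
  shows "DERIV (Sf a lam) y :> Sd a lam y"
proof -
  define P where "P = sin (pi*(1-a)*y)"
  define Q where "Q = sin (pi*(1-a)*y + a*pi)"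
  have PQ: "P > 0" "Q > 0" using trig_pos[of a y] assms by (auto simp: P_def Q_def)
  have X: "Xf a y = P / Q" by (simp add: Xf_def P_def Q_def)
  have D: "DERIV (\<lambda>y. lam * Xf a y) y :> lam * (pi*(1-a) * sin (a*pi) / Q^2)"
    using Xf_deriv[OF assms(1,2,4,5)] unfolding Q_def by (rule DERIV_cmult)
  have pos: "lam * Xf a y > 0" using Xf_pos[of a y] assms by simp
  have D2: "DERIV (\<lambda>y. (lam * Xf a y) powr (1/a)) y :>
     (1/a) * (lam * Xf a y) powr (1/a - of_nat 1) * (lam * (pi*(1-a) * sin (a*pi) / Q^2))"
    by (rule DERIV_fun_powr[OF D pos])
  have e1: "(lam * Xf a y) powr (1/a - of_nat 1) = Sf a lam y / (lam * Xf a y)"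
    using pos by (simp add: powr_diff Sf_def)
  have "(1/a) * (lam * Xf a y) powr (1/a - of_nat 1) * (lam * (pi*(1-a) * sin (a*pi) / Q^2)) = Sd a lam y"
    unfolding e1 unfolding Sd_def P_def[symmetric] Q_def[symmetric] X
    using PQ assms by (simp add: field_simps power2_eq_square)
  with D2 show ?thesis unfolding Sf_def[abs_def] by simp
qed

lemma alg:
  fixes a lam P Q sa S pp :: real
  assumes "a>0" "a<1" "lam>0" "P>0" "Q>0" "sa>0" "S>0" "pp > 0"
  shows "1/(1/a-1) * lam * (sa/pp) * ((lam*P/Q)/S/(lam^2* sa^2/Q^2)) * ((1/a)* S*(pp*(1-a)* sa)/(P*Q)) = 1"
proof -
  have e1: "1/(1/a-1) = a/(1-a)" using assms by (simp add: field_simps)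
  have e2: "(lam*P/Q)/S/(lam^2* sa^2/Q^2) = P*Q/(lam* S* sa^2)" using assms by (simp add: field_simps power2_eq_square)
  have e3: "(1/a)* S*(pp*(1-a)* sa)/(P*Q) = S*pp*(1-a)* sa/(a*P*Q)" using assms by (simp add: field_simps)
  show ?thesis unfolding e1 e2 e3 using assms by (simp add: field_simps power2_eq_square)
qed

lemma W_Sd:
  assumes "0 < a" "a < 1" "0 < lam" "0 < y" "y < 1"
  shows "W_plus a lam (Sf a lam y) * Sd a lam y = 1"
proof -
  define P where "P = sin (pi*(1-a)*y)"
  define Q where "Q = sin (pi*(1-a)*y + a*pi)"
  define S where "S = Sf a lam y"
  define sa where "sa = sin (a*pi)"
  have PQ: "P > 0" "Q > 0" using trig_pos[of a y] assms by (auto simp: P_def Q_def)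
  have sa: "sa > 0" using assms by (auto simp: sa_def intro!: sin_gt_zero)
  have X: "Xf a y = P / Q" by (simp add: Xf_def P_def Q_def)
  have S: "S > 0" using Sf_pos[OF assms] by (simp add: S_def)
  have pos: "lam * Xf a y > 0" using Xf_pos[of a y] assms by simp
  have Sa: "S powr a = lam * P / Q" unfolding S_def Sf_def powr_powr X using assms pos X PQ by simp
  have S2a: "S powr (2*a) = (lam * P / Q)^2" unfolding S_def Sf_def powr_powr X using assms pos X by simp
  have Sa1: "S powr (a - 1) = (lam * P / Q) / S" using S Sa by (simp add: powr_diff)
  have key: "P^2 - 2 * P * Q * cos (a*pi) + Q^2 = sa^2"
    unfolding P_def Q_def sa_def by (rule key_trig)
  have den: "S powr (2 * a) - 2 * lam * S powr a * cos (a * pi) + lam ^ 2 = lam^2 * sa^2 / Q^2"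
    unfolding S2a Sa key[symmetric] using PQ by (simp add: field_simps power2_eq_square)
  have "W_plus a lam S * Sd a lam y =
     (1 / C_const a) * lam * (sa / pi) * (((lam * P / Q) / S) / (lam^2 * sa^2 / Q^2)) *
       ((1/a) * S * (pi * (1-a) * sa) / (P * Q))"
    unfolding W_plus_def den Sa1 Sd_def S_def[symmetric] P_def[symmetric] Q_def[symmetric] sa_def[symmetric] ..
  also have "\<dots> = 1" unfolding C_const_def by (rule alg) (use PQ sa S assms in auto)
  finally show ?thesis by (simp add: S_def)
qed



lemma Sd_cont:
  assumes "0 < a" "a < 1" "0 < lam" "0 < y" "y < 1"
  shows "isCont (Sd a lam) y"
  unfolding Sd_def Sf_def Xf_def
  using trig_pos[OF assms(1,2,4,5)] assms
  by (intro continuous_intros) auto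

lemma den_pos:
  assumes "0 < a" "a < 1" "0 < lam"
  shows "s powr (2 * a) - 2 * lam * s powr a * cos (a * pi) + lam ^ 2 > 0"
proof -
  have sa: "sin (a*pi) > 0" using assms by (auto intro!: sin_gt_zero)
  have aa: "2 * a = a + a" by simp
  have e: "s powr (2 * a) = (s powr a)^2" unfolding aa by (simp only: powr_add power2_eq_square)
  have sc: "sin (a*pi) * sin (a*pi) + cos (a*pi) * cos (a*pi) = 1"
    using sin_cos_squared_add[of "a*pi"] by (simp only: power2_eq_square)
  have "s powr (2 * a) - 2 * lam * s powr a * cos (a * pi) + lam ^ 2
      = (s powr a - lam * cos (a*pi))^2 + lam^2 * (sin (a*pi))^2"
    unfolding e using sc by (simp only: power2_eq_square) algebra
  also have "\<dots> > 0" using sa assms by (intro add_nonneg_pos) auto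
  finally show ?thesis .
qed

lemma f_cont:
  assumes "0 < a" "a < 1" "0 < lam" "0 < s"
  shows "isCont (\<lambda>s. W_plus a lam s * exp (- s * t)) s"
  unfolding W_plus_def
  using den_pos[OF assms(1-3), of s] assms
  by (intro continuous_intros) auto

lemma Sf_lim0:
  assumes "0 < a" "a < 1" "0 < lam"
  shows "(Sf a lam \<longlongrightarrow> 0) (at_right 0)"
proof -
  have "((\<lambda>y. lam * Xf a y) \<longlongrightarrow> lam * Xf a 0) (at_right 0)"
    unfolding Xf_def using sin_gt_zero[of "a*pi"] assms
    by (intro tendsto_intros) auto
  then have L: "((\<lambda>y. lam * Xf a y) \<longlongrightarrow> 0) (at_right 0)" by (simp add: Xf_def)
  have ev: "\<forall>\<^sub>F y in at_right 0. 0 \<le> lam * Xf a y"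
    unfolding eventually_at_right_field
    using assms Xf_pos[of a] by (intro exI[of _ 1]) (auto intro!: less_imp_le)
  have "((\<lambda>y. (lam * Xf a y) powr (1/a)) \<longlongrightarrow> 0) (at_right 0)"
    by (rule tendsto_zero_powrI[OF L tendsto_const[of "1/a"] ev]) (use assms in simp)
  then show ?thesis unfolding Sf_def[abs_def] .
qed


lemma Sf_lim1:
  assumes "0 < a" "a < 1" "0 < lam"
  shows "filterlim (Sf a lam) at_top (at_left 1)"
proof -
  have sa: "sin (a*pi) > 0" using assms by (auto intro!: sin_gt_zero)
  have e1: "sin (pi*(1-a)*1) = sin (a*pi)"
  proof -
    have "pi*(1-a)*1 = pi - a*pi" by (simp add: algebra_simps)
    then show ?thesis by simp
  qed
  have e2: "pi*(1-a)*1 + a*pi = pi" by (simp add: algebra_simps)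
  have P: "((\<lambda>y. sin (pi*(1-a)*y)) \<longlongrightarrow> sin (a*pi)) (at_left 1)"
  proof -
    have "((\<lambda>y. sin (pi*(1-a)*y)) \<longlongrightarrow> sin (pi*(1-a)*1)) (at_left 1)"
      by (intro tendsto_intros)
    then show ?thesis unfolding e1 .
  qed
  have Q0: "((\<lambda>y. sin (pi*(1-a)*y + a*pi)) \<longlongrightarrow> sin (pi*(1-a)*1 + a*pi)) (at_left 1)"
    by (intro tendsto_intros)
  have Q: "((\<lambda>y. sin (pi*(1-a)*y + a*pi)) \<longlongrightarrow> 0) (at_left 1)"
    using Q0 unfolding e2 by simp
  have evQ: "\<forall>\<^sub>F y in at_left 1. 0 < sin (pi*(1-a)*y + a*pi)"
    unfolding eventually_at_left_field
    using assms trig_pos[of a] by (intro exI[of _ 0]) auto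
  have X: "filterlim (Xf a) at_top (at_left 1)"
    unfolding Xf_def[abs_def] by (rule LIM_at_top_divide[OF P sa Q evQ])
  have LX: "filterlim (\<lambda>y. lam * Xf a y) at_top (at_left 1)"
    by (rule filterlim_tendsto_pos_mult_at_top[OF tendsto_const assms(3) X])
  have ev: "\<forall>\<^sub>F y in at_left 1. lam * Xf a y \<le> Sf a lam y"
  proof -
    have "\<forall>\<^sub>F y in at_left 1. 1 \<le> lam * Xf a y"
      using LX by (simp add: filterlim_at_top)
    then show ?thesis
    proof (rule eventually_mono)
      fix y assume h: "1 \<le> lam * Xf a y"
      have "lam * Xf a y = (lam * Xf a y) powr 1" using h by simp
      also have "\<dots> \<le> (lam * Xf a y) powr (1/a)" using h assms by (intro powr_mono) auto
      finally show "lam * Xf a y \<le> Sf a lam y" by (simp add: Sf_def)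
    qed
  qed
  show ?thesis by (rule filterlim_at_top_mono[OF LX ev])
qed



lemma W_nonneg:
  assumes "0 < a" "a < 1" "0 < lam"
  shows "0 \<le> W_plus a lam s"
proof -
  have "0 < sin (a*pi)" using assms by (auto intro!: sin_gt_zero)
  moreover have "0 < C_const a" using assms by (simp add: C_const_def field_simps)
  ultimately show ?thesis unfolding W_plus_def using den_pos[OF assms, of s] assms
    by (intro mult_nonneg_nonneg divide_nonneg_nonneg) auto
qed

lemma exp_S_integrable:
  assumes "0 \<le> t"
  shows "set_integrable lborel {0<..<1::real} (\<lambda>y. exp (- Sf a lam y * t))"
proof (rule set_integrable_bound[where f="\<lambda>_. 1::real"])
  show "set_integrable lborel {0<..<1::real} (\<lambda>_. 1::real)"
    unfolding set_integrable_def by (simp add: integrable_real_indicator)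
  show "set_borel_measurable lborel {0<..<1::real} (\<lambda>y. exp (- Sf a lam y * t))"
    unfolding set_borel_measurable_def Sf_def Xf_def by measurable
  show "AE x in lborel. x \<in> {0<..<1} \<longrightarrow> norm (exp (- Sf a lam x * t)) \<le> norm (1::real)"
    using assms by (auto simp: Sf_def intro!: AE_I2 mult_nonneg_nonneg)
qed

lemma subst_main:
  assumes "0 < a" "a < 1" "0 < lam" "0 \<le> t"
  shows "(LBINT s:{0<..}. W_plus a lam s * exp (- s * t)) = (LBINT y:{0<..<1}. exp (- Sf a lam y * t))"
proof -
  let ?f = "\<lambda>s. W_plus a lam s * exp (- s * t)"
  have int: "set_integrable lborel (einterval 0 1) (\<lambda>x. ?f (Sf a lam x) * Sd a lam x)"
  proof -
    have "set_integrable lborel {0<..<1::real} (\<lambda>x. ?f (Sf a lam x) * Sd a lam x)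
       = set_integrable lborel {0<..<1::real} (\<lambda>y. exp (- Sf a lam y * t))"
    proof (rule set_integrable_cong)
      fix x :: real assume "x \<in> {0<..<1}"
      then show "?f (Sf a lam x) * Sd a lam x = exp (- Sf a lam x * t)"
        using W_Sd[OF assms(1-3), of x] by (simp add: algebra_simps)
    qed auto
    then show ?thesis using exp_S_integrable[OF assms(4)] by (simp add: zero_ereal_def one_ereal_def)
  qed
  have "(LBINT x=0..\<infinity>. ?f x) = (LBINT x=0..1. ?f (Sf a lam x) * Sd a lam x)"
  proof (rule interval_integral_substitution_nonneg(2)[of 0 1 "Sf a lam" "Sd a lam" ?f 0 "\<infinity>"])
    show "(0::ereal) < 1" by simp
    show "\<And>x. 0 < ereal x \<Longrightarrow> ereal x < 1 \<Longrightarrow> DERIV (Sf a lam) x :> Sd a lam x"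
      using Sf_deriv[OF assms(1-3)] by (simp add: zero_ereal_def one_ereal_def)
    show "\<And>x. 0 < ereal x \<Longrightarrow> ereal x < 1 \<Longrightarrow> isCont ?f (Sf a lam x)"
      using f_cont[OF assms(1-3)] Sf_pos[OF assms(1-3)] by (simp add: zero_ereal_def one_ereal_def)
    show "\<And>x. 0 < ereal x \<Longrightarrow> ereal x < 1 \<Longrightarrow> isCont (Sd a lam) x"
      using Sd_cont[OF assms(1-3)] by (simp add: zero_ereal_def one_ereal_def)
    show "\<And>x. 0 < ereal x \<Longrightarrow> ereal x < 1 \<Longrightarrow> 0 \<le> ?f (Sf a lam x)"
      using W_nonneg[OF assms(1-3)] by simp
    show "\<And>x. 0 \<le> ereal x \<Longrightarrow> ereal x \<le> 1 \<Longrightarrow> 0 \<le> Sd a lam x"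
      using Sd_nonneg[OF assms(1,2)] by (simp add: zero_ereal_def one_ereal_def)
    show "((ereal \<circ> Sf a lam \<circ> real_of_ereal) \<longlongrightarrow> 0) (at_right 0)"
      using Sf_lim0[OF assms(1-3)] by (simp add: zero_ereal_def ereal_tendsto_simps)
    show "((ereal \<circ> Sf a lam \<circ> real_of_ereal) \<longlongrightarrow> \<infinity>) (at_left 1)"
      using Sf_lim1[OF assms(1-3)] by (simp add: one_ereal_def ereal_tendsto_simps)
    show "set_integrable lborel (einterval 0 1) (\<lambda>x. ?f (Sf a lam x) * Sd a lam x)" by (rule int)
  qed
  also have "\<dots> = (LBINT y:{0<..<1}. exp (- Sf a lam y * t))"
    unfolding interval_lebesgue_integral_def
    apply (simp add: zero_ereal_def one_ereal_def)
    apply (rule set_lebesgue_integral_cong)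
    using W_Sd[OF assms(1-3)] by (auto simp: algebra_simps)
  finally show ?thesis
    using interval_integral_to_infinity_eq[of lborel 0 ?f] by (simp add: zero_ereal_def)
qed



definition Rf :: "real \<Rightarrow> real \<Rightarrow> real" where
  "Rf a x1 = (let v = C_const a * x1 in
     (sin (a * pi * (1 + 2 * v)) - sin (a * pi)) / sin (2 * a * pi * (1 + v)))"

definition Kf :: "real \<Rightarrow> real \<Rightarrow> real \<Rightarrow> real" where
  "Kf a lam x1 = (1 / lam) powr (1 / a) * Rf a x1 powr (1 / a)"

lemma tau_eq: "tau_fun a lam x1 x2 = - (Kf a lam x1 * ln x2)"
  unfolding tau_fun_def Kf_def Rf_def Let_def by simp

lemma Kf_nonneg: "0 \<le> Kf a lam x1"
  unfolding Kf_def by simp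

lemma Kf_good:
  assumes "0 < a" "a < 1" "0 < lam" "0 < x1" "x1 < 1"
    and c: "cos (pi*(1-a)*x1 + a*pi) \<noteq> 0"
  shows "Kf a lam x1 > 0" "1 / Kf a lam x1 = Sf a lam (1 - x1)"
proof -
  define ph where "ph = pi*(1-a)*x1"
  define th where "th = a*pi + ph"
  have c': "cos th \<noteq> 0" using c by (simp add: th_def ph_def add.commute)
  have v: "a * (C_const a * x1) = (1 - a) * x1" using assms by (simp add: C_const_def field_simps)
  have e1: "a * pi * (1 + 2 * (C_const a * x1)) = th + ph"
  proof -
    have "a * pi * (1 + 2 * (C_const a * x1)) = a*pi + 2 * pi * (a * (C_const a * x1))"
      by (simp add: algebra_simps)
    also have "\<dots> = th + ph" unfolding v th_def ph_def by (simp add: algebra_simps)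
    finally show ?thesis .
  qed
  have e2: "2 * a * pi * (1 + C_const a * x1) = 2 * th"
  proof -
    have "2 * a * pi * (1 + C_const a * x1) = 2 * (a*pi + pi * (a * (C_const a * x1)))"
      by (simp add: algebra_simps)
    also have "\<dots> = 2 * th" unfolding v th_def ph_def by (simp add: algebra_simps)
    finally show ?thesis .
  qed
  have e3: "a * pi = th - ph" by (simp add: th_def)
  have num: "sin (th + ph) - sin (th - ph) = 2 * cos th * sin ph"
    by (simp add: sin_add sin_diff)
  have den: "sin (2 * th) = 2 * sin th * cos th" by (rule sin_double)
  have R: "Rf a x1 = sin ph / sin th"
    unfolding Rf_def Let_def e1 e2 
    apply (subst e3) unfolding num den using c' by (simp add: field_simps)
  have pos: "sin ph > 0" "sin th > 0"
    using trig_pos[OF assms(1,2,4,5)] by (simp_all add: ph_def th_def add.commute)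
  have X: "Xf a (1 - x1) = sin th / sin ph"
  proof -
    have f1: "pi*(1-a)*(1-x1) = pi - th" by (simp add: th_def ph_def algebra_simps)
    have f2: "pi*(1-a)*(1-x1) + a*pi = pi - ph" by (simp add: th_def ph_def algebra_simps)
    show ?thesis unfolding Xf_def f2 unfolding f1 by simp
  qed
  have K: "Kf a lam x1 = (sin ph / (lam * sin th)) powr (1/a)"
    unfolding Kf_def R by (simp add: powr_mult[symmetric])
  show "Kf a lam x1 > 0" unfolding K using pos assms by simp
  show "1 / Kf a lam x1 = Sf a lam (1 - x1)"
  proof -
    have "1 / (sin ph / (lam * sin th)) powr (1/a) = (1 / (sin ph / (lam * sin th))) powr (1/a)"
      by (simp add: powr_divide)
    also have "1 / (sin ph / (lam * sin th)) = lam * (sin th / sin ph)" using pos assms by simp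
    finally show ?thesis unfolding K Sf_def X .
  qed
qed



lemma theta_range:
  assumes "0 < a" "a < 1" "0 < y" "y < 1"
  shows "0 < pi*(1-a)*y + a*pi" "pi*(1-a)*y + a*pi < pi"
proof -
  have h1: "0 < pi*(1-a)*y" using assms by simp
  have h2: "pi*(1-a)*y < pi*(1-a)" using mult_strict_left_mono[of y 1 "pi*(1-a)"] assms by simp
  have e: "pi*(1-a) + a*pi = pi" by (simp add: algebra_simps)
  show "pi*(1-a)*y + a*pi < pi" using h2 e by linarith
  show "0 < pi*(1-a)*y + a*pi" using h1 mult_pos_pos[OF assms(1) pi_gt_zero] by linarith
qed

lemma AE_good:
  assumes "0 < a" "a < 1"
  shows "AE x in lborel. 0 < x \<longrightarrow> x < 1 \<longrightarrow> cos (pi*(1-a)*x + a*pi) \<noteq> 0"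
proof -
  define x0 where "x0 = (pi/2 - a*pi)/(pi*(1-a))"
  have "AE x in lborel. x \<noteq> x0" by (rule AE_lborel_singleton)
  then show ?thesis
  proof (rule eventually_mono, intro impI notI)
    fix x :: real assume x: "x \<noteq> x0" "0 < x" "x < 1" and c: "cos (pi*(1-a)*x + a*pi) = 0"
    have r: "0 < pi*(1-a)*x + a*pi" "pi*(1-a)*x + a*pi < pi" using theta_range[OF assms x(2,3)] by auto
    have "pi*(1-a)*x + a*pi = pi/2"
      by (rule cos_inj_pi) (use r c in auto)
    then have "x = x0" unfolding x0_def using assms by (simp add: field_simps)
    with x show False by simp
  qed
qed

lemma reflect_integral:
  fixes h :: "real \<Rightarrow> real"
  shows "(LBINT x:{0<..<1}. h (1 - x)) = (LBINT y:{0<..<1}. h y)"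
proof -
  have "(LBINT y:{0<..<1}. h y) = (\<integral>y. indicator {0<..<1::real} y * h y \<partial>lborel)"
    by (simp add: set_lebesgue_integral_def)
  also have "\<dots> = \<bar>-1\<bar> *\<^sub>R (\<integral>x. indicator {0<..<1::real} (1 + (-1) * x) * h (1 + (-1) * x) \<partial>lborel)"
    by (rule lborel_integral_real_affine) simp
  also have "\<dots> = (\<integral>x. indicator {0<..<1::real} x * h (1 - x) \<partial>lborel)"
    by (simp, intro Bochner_Integration.integral_cong refl) (auto simp: indicator_def)
  also have "\<dots> = (LBINT x:{0<..<1}. h (1 - x))"
    by (simp add: set_lebesgue_integral_def)
  finally show ?thesis ..
qed



lemma indep_lborel:
  assumes "prob_space.indep_var M borel u1 borel u2" "prob_space M"
  shows "prob_space.indep_var M lborel u1 lborel (u2 :: _ \<Rightarrow> real)"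
proof -
  interpret prob_space M by fact
  have e: "(case_bool lborel lborel :: bool \<Rightarrow> real measure) = (\<lambda>_. lborel)"
    by (auto simp: fun_eq_iff split: bool.split)
  have e2: "(case_bool borel borel :: bool \<Rightarrow> real measure) = (\<lambda>_. borel)"
    by (auto simp: fun_eq_iff split: bool.split)
  show ?thesis using assms(1) unfolding indep_var_def indep_vars_def e e2
    by (simp add: measurable_lborel1)
qed

definition Gf :: "real \<Rightarrow> real \<Rightarrow> real \<Rightarrow> real \<Rightarrow> real" where
  "Gf a lam t x1 = (if 0 < Kf a lam x1 then exp (- t / Kf a lam x1) else 0)"

lemma Kf_meas[measurable]: "Kf a lam \<in> borel_measurable borel"
  unfolding Kf_def[abs_def] Rf_def Let_def by measurable

lemma Gf_meas[measurable]: "Gf a lam t \<in> borel_measurable borel"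
  unfolding Gf_def[abs_def] by measurable

lemma Gf_bounds: "0 \<le> t \<Longrightarrow> 0 \<le> Gf a lam t x \<and> Gf a lam t x \<le> 1"
  unfolding Gf_def by auto

lemma inner:
  assumes "0 \<le> t"
  shows "(\<integral>\<^sup>+x2. (indicator {0<..<1} x1 * indicator {0<..<1} x2 :: ennreal)
            * indicator {p. t < tau_fun a lam (fst p) (snd p)} (x1, x2) \<partial>lborel)
       = ennreal (indicator {0<..<1} x1 * Gf a lam t x1)"
proof (cases "x1 \<in> {0<..<1}")
  case False
  then show ?thesis by simp
next
  case True
  define K where "K = Kf a lam x1"
  have K0: "0 \<le> K" unfolding K_def by (rule Kf_nonneg)
  define A where "A = {x2. 0 < x2 \<and> x2 < 1 \<and> t < - (K * ln x2)}"
  have eq: "\<And>x2. (indicator {0<..<1} x1 * indicator {0<..<1} x2 :: ennreal)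
            * indicator {p. t < tau_fun a lam (fst p) (snd p)} (x1, x2) = indicator A x2"
    using True by (auto simp: indicator_def A_def tau_eq K_def)
  have "(\<integral>\<^sup>+x2. (indicator {0<..<1} x1 * indicator {0<..<1} x2 :: ennreal)
            * indicator {p. t < tau_fun a lam (fst p) (snd p)} (x1, x2) \<partial>lborel)
      = emeasure lborel A"
    unfolding eq by (rule nn_integral_indicator) (simp add: A_def)
  also have "\<dots> = ennreal (Gf a lam t x1)"
  proof (cases "0 < K")
    case True
    have le1: "exp (- t / K) \<le> 1" using True assms by simp
    have "A = {0<..<exp (- t / K)}"
    proof (intro set_eqI iffI)
      fix x assume x: "x \<in> A"
      then have x0: "0 < x" by (simp add: A_def)
      from x have "t < - (K * ln x)" by (simp add: A_def)
      then have "ln x < - t / K" using True by (simp add: field_simps)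
      then have "x < exp (- t / K)" using x0 by (metis exp_less_cancel_iff exp_ln)
      with x0 show "x \<in> {0<..<exp (- t / K)}" by simp
    next
      fix x assume x: "x \<in> {0<..<exp (- t / K)}"
      then have x0: "0 < x" and xl: "x < exp (- t / K)" by auto
      then have "ln x < - t / K" by (metis ln_exp ln_less_cancel_iff exp_gt_zero)
      then have "t < - (K * ln x)" using True by (simp add: field_simps)
      moreover have "x < 1" using xl le1 by linarith
      ultimately show "x \<in> A" using x0 by (simp add: A_def)
    qed
    then show ?thesis using True by (simp add: Gf_def K_def[symmetric])
  next
    case False
    then have "K = 0" using K0 by simp
    then have "A = {}" using assms by (auto simp: A_def)
    then show ?thesis using False by (simp add: Gf_def K_def[symmetric])
  qed
  finally show ?thesis using True by simp
qed



lemma prob_part: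
  fixes a lam t :: real and M :: "'m measure" and u1 u2 :: "'m \<Rightarrow> real"
  assumes "0 < a" "a < 1" "0 < lam" "0 \<le> t" and P: "prob_space M"
    and D1: "distributed M lborel u1 (\<lambda>x. indicator {0<..<1} x)"
    and D2: "distributed M lborel u2 (\<lambda>x. indicator {0<..<1} x)"
    and I: "prob_space.indep_var M borel u1 borel u2"
  shows "measure M {x \<in> space M. tau_fun a lam (u1 x) (u2 x) > t}
       = (LBINT x1:{0<..<1}. exp (- Sf a lam (1 - x1) * t))"
proof -
  interpret prob_space M by fact
  let ?F = "\<lambda>(x::real, y::real). (indicator {0<..<1} x * indicator {0<..<1} y :: ennreal)"
  have J: "distributed M (lborel \<Otimes>\<^sub>M lborel) (\<lambda>x. (u1 x, u2 x)) ?F"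
    by (rule distributed_joint_indep[OF lborel.sigma_finite_measure_axioms
          lborel.sigma_finite_measure_axioms D1 D2 indep_lborel[OF I P]])
  define T where "T = {p :: real \<times> real. t < tau_fun a lam (fst p) (snd p)}"
  have Tm: "T \<in> sets (lborel \<Otimes>\<^sub>M lborel)"
  proof -
    have "{p \<in> space (lborel \<Otimes>\<^sub>M lborel). t < tau_fun a lam (fst p) (snd p)} \<in> sets (lborel \<Otimes>\<^sub>M lborel)"
      unfolding tau_fun_def Let_def by measurable
    then show ?thesis by (simp add: T_def space_pair_measure)
  qed
  have meas: "(\<lambda>x. (u1 x, u2 x)) \<in> measurable M (lborel \<Otimes>\<^sub>M lborel)"
    by (rule distributed_measurable[OF J])
  have Fm: "?F \<in> borel_measurable (lborel \<Otimes>\<^sub>M lborel)"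
    by (rule distributed_borel_measurable[OF J])
  have "{x \<in> space M. tau_fun a lam (u1 x) (u2 x) > t} = (\<lambda>x. (u1 x, u2 x)) -` T \<inter> space M"
    by (auto simp: T_def)
  then have "measure M {x \<in> space M. tau_fun a lam (u1 x) (u2 x) > t}
     = measure (distr M (lborel \<Otimes>\<^sub>M lborel) (\<lambda>x. (u1 x, u2 x))) T"
    using measure_distr[OF meas Tm] by simp
  also have "\<dots> = measure (density (lborel \<Otimes>\<^sub>M lborel) ?F) T"
    by (simp add: distributed_distr_eq_density[OF J])
  also have "\<dots> = enn2real (\<integral>\<^sup>+p. ?F p * indicator T p \<partial>(lborel \<Otimes>\<^sub>M lborel))"
    unfolding measure_def by (simp add: emeasure_density[OF Fm Tm])
  also have "(\<integral>\<^sup>+p. ?F p * indicator T p \<partial>(lborel \<Otimes>\<^sub>M lborel))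
      = (\<integral>\<^sup>+x1. \<integral>\<^sup>+x2. ?F (x1, x2) * indicator T (x1, x2) \<partial>lborel \<partial>lborel)"
    by (rule lborel.nn_integral_fst[symmetric]) (use Fm Tm in measurable)
  also have "\<dots> = (\<integral>\<^sup>+x1. ennreal (indicator {0<..<1} x1 * Gf a lam t x1) \<partial>lborel)"
    using inner[OF assms(4), of _ a lam] by (simp add: T_def)
  also have "\<dots> = ennreal (\<integral>x1. indicator {0<..<1} x1 * Gf a lam t x1 \<partial>lborel)"
  proof (rule nn_integral_eq_integral)
    show "integrable lborel (\<lambda>x1. indicator {0<..<1::real} x1 * Gf a lam t x1)"
    proof (rule Bochner_Integration.integrable_bound[of lborel "indicator {0<..<1::real}"])
      show "integrable lborel (indicator {0<..<1::real} :: real \<Rightarrow> real)"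
        by (simp add: integrable_real_indicator)
      show "(\<lambda>x1. indicator {0<..<1::real} x1 * Gf a lam t x1) \<in> borel_measurable lborel"
        by measurable
      show "AE x in lborel. norm (indicator {0<..<1::real} x * Gf a lam t x) \<le> norm (indicator {0<..<1::real} x :: real)"
      proof (intro AE_I2)
        fix x :: real
        show "norm (indicator {0<..<1::real} x * Gf a lam t x) \<le> norm (indicator {0<..<1::real} x :: real)"
          using Gf_bounds[OF assms(4), of a lam x] by (auto simp: indicator_def)
      qed
    qed
    show "AE x in lborel. 0 \<le> indicator {0<..<1::real} x * Gf a lam t x"
      using Gf_bounds[OF assms(4)] by (auto intro!: AE_I2)
  qed
  also have "enn2real \<dots> = (\<integral>x1. indicator {0<..<1} x1 * Gf a lam t x1 \<partial>lborel)"
    using Gf_bounds[OF assms(4)] by (intro enn2real_ennreal integral_nonneg) auto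
  also have "\<dots> = (LBINT x1:{0<..<1}. Gf a lam t x1)"
    by (simp add: set_lebesgue_integral_def)
  also have "\<dots> = (LBINT x1:{0<..<1}. exp (- Sf a lam (1 - x1) * t))"
  proof (rule set_lebesgue_integral_cong_AE)
    show "{0<..<1::real} \<in> sets lborel" by simp
    show "Gf a lam t \<in> borel_measurable lborel" by measurable
    show "(\<lambda>x1. exp (- Sf a lam (1 - x1) * t)) \<in> borel_measurable lborel"
      unfolding Sf_def Xf_def by measurable
    show "AE x\<in>{0<..<1} in lborel. Gf a lam t x = exp (- Sf a lam (1 - x) * t)"
      using AE_good[OF assms(1,2)]
    proof (rule eventually_mono, intro impI)
      fix x :: real assume h: "0 < x \<longrightarrow> x < 1 \<longrightarrow> cos (pi*(1-a)*x + a*pi) \<noteq> 0"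
        and x: "x \<in> {0<..<1}"
      then have c: "cos (pi*(1-a)*x + a*pi) \<noteq> 0" by auto
      have K: "Kf a lam x > 0" "1 / Kf a lam x = Sf a lam (1 - x)"
        using Kf_good[OF assms(1-3) _ _ c] x by auto
      have "t / Kf a lam x = Sf a lam (1 - x) * t" using K(2) by (metis divide_inverse mult.commute inverse_eq_divide)
      then show "Gf a lam t x = exp (- Sf a lam (1 - x) * t)"
        using K(1) by (simp add: Gf_def)
    qed
  qed
  finally show ?thesis .
qed



lemma AE_unif:
  assumes D: "distributed M lborel u (\<lambda>x. indicator {0<..<1} x)"
    and Q: "AE y in lborel. 0 < y \<longrightarrow> y < 1 \<longrightarrow> P y"
  shows "AE x in M. 0 < u x \<and> u x < 1 \<and> P (u x)"
proof (rule AE_distrD[OF distributed_measurable[OF D]])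
  show "AE y in distr M lborel u. 0 < y \<and> y < 1 \<and> P y"
    unfolding distributed_distr_eq_density[OF D]
    unfolding AE_density[OF distributed_borel_measurable[OF D]]
    using Q by eventually_elim (auto simp: indicator_def)
qed

theorem mainTheorem4:
  fixes a lam :: real and M :: "'m measure" and u1 u2 :: "'m \<Rightarrow> real"
  assumes "0 < a" and "a < 1" and "0 < lam"
    and "prob_space M"
    and "distributed M lborel u1 (\<lambda>x. indicator {0<..<1} x)"
    and "distributed M lborel u2 (\<lambda>x. indicator {0<..<1} x)"
    and "prob_space.indep_var M borel u1 borel u2"
  shows "(AE x in M. tau_fun a lam (u1 x) (u2 x) > 0)
       \<and> (\<forall>t::real. t \<ge> 0 \<longrightarrow>
            measure M {x \<in> space M. tau_fun a lam (u1 x) (u2 x) > t}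
              = (LBINT s:{0<..}. W_plus a lam s * exp (- s * t)))"
proof
  have A1: "AE x in M. 0 < u1 x \<and> u1 x < 1 \<and> cos (pi*(1-a)*u1 x + a*pi) \<noteq> 0"
    by (rule AE_unif[OF assms(5) AE_good[OF assms(1,2)]])
  have A2: "AE x in M. 0 < u2 x \<and> u2 x < 1 \<and> True"
    by (rule AE_unif[OF assms(6)]) simp
  show "AE x in M. tau_fun a lam (u1 x) (u2 x) > 0"
    using A1 A2
  proof eventually_elim
    case (elim x)
    then have K: "Kf a lam (u1 x) > 0" using Kf_good[OF assms(1-3)] by blast
    have "ln (u2 x) < 0" using elim by simp
    then show ?case using K by (simp add: tau_eq mult_pos_neg)
  qed
  show "\<forall>t::real. t \<ge> 0 \<longrightarrow>
            measure M {x \<in> space M. tau_fun a lam (u1 x) (u2 x) > t}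
              = (LBINT s:{0<..}. W_plus a lam s * exp (- s * t))"
  proof (intro allI impI)
    fix t :: real assume t: "0 \<le> t"
    have "measure M {x \<in> space M. tau_fun a lam (u1 x) (u2 x) > t}
       = (LBINT x1:{0<..<1}. exp (- Sf a lam (1 - x1) * t))"
      by (rule prob_part[OF assms(1-3) t assms(4-7)])
    also have "\<dots> = (LBINT y:{0<..<1}. exp (- Sf a lam y * t))"
      by (rule reflect_integral[where h="\<lambda>y. exp (- Sf a lam y * t)"])
    also have "\<dots> = (LBINT s:{0<..}. W_plus a lam s * exp (- s * t))"
      by (rule subst_main[OF assms(1-3) t, symmetric])
    finally show "measure M {x \<in> space M. tau_fun a lam (u1 x) (u2 x) > t}
              = (LBINT s:{0<..}. W_plus a lam s * exp (- s * t))" .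
  qed
qed


end
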